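(* Consider Algorithm PDFPM (described in the context) applied to $\min_x F(x)$, and let $\bar{x}^k$ be the point computed in Step 2 at some iteration $k$ with current parameter $\sigma_k$. Suppose Assumptions A1, A2 and A3 (described in the context) hold. If $\sigma_k\|\bar{x}^k-x^k\|\ge\epsilon$, then for every $j\in\mathcal{J}$, $$F_j(\bar{x}^k)\le F_j(x^k)-\Big(\frac{\sigma_k-5L_j-\overline{B}}{2}\Big)\|s^k\|^2+\frac{4^{\beta_j}n^{\frac{1-\beta_j}{2}}M_j+M_j}{\beta_j+1}\|s^k\|^{\beta_j+1},$$ where $s^k=\bar{x}^k-x^k$.
   Context: Setting: $m,n\ge1$, $\mathcal{J}=\{1,\dots,m\}$, $F=(F_1,\dots,F_m)$ with $F_j=f_j+h_j$, where $f_j:\mathbb{R}^n\to\mathbb{R}$ is differentiable and $h_j:\mathbb{R}^n\to\mathbb{R}\cup\{+\infty\}$ is convex. For each $j$ a map $g_{f_j}:\mathbb{R}^n\times[0,1]\to\mathbb{R}^n$ is given with $\lim_{\lambda\to0}g_{f_j}(x,\lambda)=\nabla f_j(x)$ (a gradient approximation, e.g. finite differences). $\|\cdot\|$ is the Euclidean norm (spectral norm for matrices). Algorithm PDFPM: choose $x^0\in\mathbb{R}^n$, $\alpha,\epsilon\in(0,1)$, $\sigma_0\ge1$, symmetric positive semidefinite $B_j^0\in\mathbb{R}^{n\times n}$; set $k=0$. Step 1: choose $0<\lambda_k\le \epsilon/(\sigma_k\sqrt n)$ and compute $g_{f_j}(x^k,\lambda_k)$ for each $j$. Step 2: let $\bar{x}^k$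 be the (unique) minimizer of $\Phi_{x^k}(x)+\frac{\sigma_k}{2}\|x-x^k\|^2$, where $\Phi_{x^k}(x)=\max_{j\in\mathcal{J}}[\langle g_{f_j}(x^k,\lambda_k)+\frac12B_j^k(x-x^k),x-x^k\rangle+h_j(x)-h_j(x^k)]$. Step 3: if $\sigma_k\|\bar{x}^k-x^k\|\ge\epsilon$ go to Step 4; otherwise stop. Step 4: if $F_j(\bar{x}^k)\le F_j(x^k)-\frac{\alpha\epsilon^2}{2\sigma_k}$ for all $j\in\mathcal{J}$, set $x^{k+1}=\bar{x}^k$, $\sigma_{k+1}=\sigma_k$, choose symmetric positive semidefinite $B_j^{k+1}$, set $k\leftarrow k+1$ and go to Step 1; otherwise replace $\sigma_k$ by $2\sigma_k$ and go to Step 1 (same $k$). Assumption A1: there is $\overline{B}\ge0$ with $\|B_j^k\|\le\overline{B}$ for all iterations $k$ and all $j\in\mathcal{J}$. Assumption A2: for each $j$ there are $L_j,M_j>0$ and $\beta_j\in(0,1]$ with $f_j(y)\le f_j(x)+\langle\nabla f_j(x),y-x\rangle+\frac{L_j}{2}\|y-x\|^2+\frac{M_j}{\beta_j+1}\|y-x\|^{\beta_j+1}$ for all $x,y\in\mathbb{R}^n$. Assumption A3: with the same $L_j,M_j,\beta_j$, $\|\nabla f_j(x)-g_{f_j}(x,\lambda)\|\le\lambda\frac{\sqrt n L_j}{2}+\sqrt n\frac{M_j}{\beta_j+1}\lambda^{\beta_j}$ for all $x$ and all $\lambda\in(0,1]$. *)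

theory Defs
  imports "HOL-Analysis.Analysis" "HOL-Library.Extended_Real"
begin

definition convex_ereal_fun :: "('a::real_vector \<Rightarrow> ereal) \<Rightarrow> bool" where
  "convex_ereal_fun h \<longleftrightarrow> convex {(x, r::real). h x \<le> ereal r}"

definition Phi ::
  "nat \<Rightarrow> (nat \<Rightarrow> real^'n) \<Rightarrow> (nat \<Rightarrow> real^'n^'n) \<Rightarrow> (nat \<Rightarrow> real^'n \<Rightarrow> ereal)
     \<Rightarrow> real^'n \<Rightarrow> real^'n \<Rightarrow> ereal" where
  "Phi m gk Bk h xk x =
     Max ((\<lambda>j. ereal ((gk j + (1/2) *\<^sub>R (Bk j *v (x - xk))) \<bullet> (x - xk)) + h j x - h j xk)
          ` {1..m})"

end

theory Submission
  imports Defs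
begin

theorem lemma3:
  fixes m :: nat
    and f :: "nat \<Rightarrow> real^'n \<Rightarrow> real"
    and gradf :: "nat \<Rightarrow> real^'n \<Rightarrow> real^'n"
    and h :: "nat \<Rightarrow> real^'n \<Rightarrow> ereal"
    and g :: "nat \<Rightarrow> real^'n \<Rightarrow> real \<Rightarrow> real^'n"
    and L M \<beta> :: "nat \<Rightarrow> real"
    and Bk :: "nat \<Rightarrow> real^'n^'n"
    and Bbar \<epsilon> \<sigma> lam :: real
    and xk xbar :: "real^'n"
  assumes m_pos: "m \<ge> 1"
    and grad: "\<And>j x. j \<in> {1..m} \<Longrightarrow> GDERIV (f j) x :> gradf j x"
    and h_convex: "\<And>j. j \<in> {1..m} \<Longrightarrow> convex_ereal_fun (h j)"
    and h_no_minf: "\<And>j x. j \<in> {1..m} \<Longrightarrow> h j x \<noteq> -\<infinity>"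
    and g_approx: "\<And>j x. j \<in> {1..m} \<Longrightarrow> ((\<lambda>l. g j x l) \<longlongrightarrow> gradf j x) (at_right 0)"
    and eps: "0 < \<epsilon>" "\<epsilon> < 1"
    and sigma: "\<sigma> \<ge> 1"
    and lam: "0 < lam" "lam \<le> \<epsilon> / (\<sigma> * sqrt (real CARD('n)))"
    and xk_dom: "\<And>j. j \<in> {1..m} \<Longrightarrow> h j xk \<noteq> \<infinity>"
    and B_sym: "\<And>j. j \<in> {1..m} \<Longrightarrow> transpose (Bk j) = Bk j"
    and B_psd: "\<And>j v. j \<in> {1..m} \<Longrightarrow> v \<bullet> (Bk j *v v) \<ge> 0"
    and A1: "Bbar \<ge> 0" "\<And>j. j \<in> {1..m} \<Longrightarrow> onorm (\<lambda>v. Bk j *v v) \<le> Bbar"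
    and A2_par: "\<And>j. j \<in> {1..m} \<Longrightarrow> L j > 0 \<and> M j > 0 \<and> 0 < \<beta> j \<and> \<beta> j \<le> 1"
    and A2: "\<And>j x y. j \<in> {1..m} \<Longrightarrow>
               f j y \<le> f j x + gradf j x \<bullet> (y - x) + L j / 2 * (norm (y - x))\<^sup>2
                       + M j / (\<beta> j + 1) * norm (y - x) powr (\<beta> j + 1)"
    and A3: "\<And>j x l. j \<in> {1..m} \<Longrightarrow> 0 < l \<Longrightarrow> l \<le> 1 \<Longrightarrow>
               norm (gradf j x - g j x l)
                 \<le> l * sqrt (real CARD('n)) * L j / 2
                   + sqrt (real CARD('n)) * M j / (\<beta> j + 1) * l powr \<beta> j"
    and xbar_min: "\<And>y. Phi m (\<lambda>j. g j xk lam) Bk h xk xbar + ereal (\<sigma> / 2 * (norm (xbar - xk))\<^sup>2)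
                      \<le> Phi m (\<lambda>j. g j xk lam) Bk h xk y + ereal (\<sigma> / 2 * (norm (y - xk))\<^sup>2)"
    and step3: "\<sigma> * norm (xbar - xk) \<ge> \<epsilon>"
  shows "\<forall>j\<in>{1..m}.
           ereal (f j xbar) + h j xbar
             \<le> ereal (f j xk) + h j xk
                - ereal ((\<sigma> - 5 * L j - Bbar) / 2 * (norm (xbar - xk))\<^sup>2)
                + ereal ((4 powr \<beta> j * real CARD('n) powr ((1 - \<beta> j) / 2) * M j + M j)
                          / (\<beta> j + 1) * norm (xbar - xk) powr (\<beta> j + 1))"
proof
  fix j assume j: "j \<in> {1..m}"
  define s where "s = xbar - xk"
  define d where "d = norm s"
  define n where "n = real CARD('n)"
  define G where "G = (\<lambda>j. g j xk lam)"
  have n1: "n \<ge> 1" unfolding n_def by simp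
  have sqn: "sqrt n \<ge> 1" using n1 by simp
  have dpos: "d > 0"
  proof -
    have "\<sigma> * d > 0" using step3 eps unfolding d_def s_def by linarith
    then show ?thesis using sigma by (simp add: zero_less_mult_iff)
  qed
  have Phi0: "Phi m G Bk h xk xk = 0"
  proof -
    have "(\<lambda>j. ereal ((G j + (1/2) *\<^sub>R (Bk j *v (xk - xk))) \<bullet> (xk - xk)) + h j xk - h j xk) ` {1..m} = {0}"
    proof (rule set_eqI, rule iffI)
      fix z assume "z \<in> (\<lambda>j. ereal ((G j + (1/2) *\<^sub>R (Bk j *v (xk - xk))) \<bullet> (xk - xk)) + h j xk - h j xk) ` {1..m}"
      then obtain i where i: "i \<in> {1..m}" and z: "z = ereal ((G i + (1/2) *\<^sub>R (Bk i *v (xk - xk))) \<bullet> (xk - xk)) + h i xk - h i xk" by blast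
      obtain b where b: "h i xk = ereal b" using xk_dom[OF i] h_no_minf[OF i] by (cases "h i xk") auto
      show "z \<in> {0}" using z b by simp
    next
      fix z :: ereal assume z: "z \<in> {0}"
      have i: "1 \<in> {1..m}" using m_pos by simp
      obtain b where b: "h 1 xk = ereal b" using xk_dom[OF i] h_no_minf[OF i] by (cases "h 1 xk") auto
      show "z \<in> (\<lambda>j. ereal ((G j + (1/2) *\<^sub>R (Bk j *v (xk - xk))) \<bullet> (xk - xk)) + h j xk - h j xk) ` {1..m}"
        using z b i by (auto intro!: image_eqI[where x=1])
    qed
    then show ?thesis unfolding Phi_def by simp
  qed
  have min0: "Phi m G Bk h xk xbar + ereal (\<sigma> / 2 * d\<^sup>2) \<le> 0"
    using xbar_min[of xk] Phi0 unfolding G_def d_def s_def by simp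
  define q where "q = (G j + (1/2) *\<^sub>R (Bk j *v s)) \<bullet> s"
  have termle: "ereal q + h j xbar - h j xk \<le> Phi m G Bk h xk xbar"
    unfolding Phi_def q_def s_def by (rule Max_ge) (use j in auto)
  obtain b where b: "h j xk = ereal b" using xk_dom[OF j] h_no_minf[OF j] by (cases "h j xk") auto
  have hfin: "h j xbar \<noteq> \<infinity>"
  proof
    assume "h j xbar = \<infinity>"
    then have "Phi m G Bk h xk xbar = \<infinity>" using termle b by simp
    then show False using min0 by simp
  qed
  obtain a where a: "h j xbar = ereal a" using hfin h_no_minf[OF j] by (cases "h j xbar") auto
  have key: "q + a - b + \<sigma> / 2 * d\<^sup>2 \<le> 0"
  proof -
    have "ereal (q + a - b) + ereal (\<sigma> / 2 * d\<^sup>2) \<le> 0"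
    proof -
      have "ereal (q + a - b) \<le> Phi m G Bk h xk xbar" using termle a b by simp
      then show ?thesis using min0 by (meson add_right_mono order_trans)
    qed
    then show ?thesis by simp
  qed
  have par: "L j > 0" "M j > 0" "0 < \<beta> j" "\<beta> j \<le> 1" using A2_par[OF j] by auto
  have Bs: "(Bk j *v s) \<bullet> s \<ge> 0" using B_psd[OF j, of s] by (simp add: inner_commute)
  have qge: "q \<ge> G j \<bullet> s" unfolding q_def using Bs by (simp add: inner_add_left)
  have fA2: "f j xbar \<le> f j xk + gradf j xk \<bullet> s + L j / 2 * d\<^sup>2 + M j / (\<beta> j + 1) * d powr (\<beta> j + 1)"
    using A2[OF j, where x=xk and y=xbar] unfolding s_def d_def by simp
  have lamd: "lam * sqrt n \<le> d"
  proof -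
    have "lam \<le> \<epsilon> / (\<sigma> * sqrt n)" using lam unfolding n_def by simp
    also have "\<dots> \<le> (\<sigma> * d) / (\<sigma> * sqrt n)"
      using step3 sigma sqn unfolding d_def s_def by (intro divide_right_mono) auto
    also have "\<dots> = d / sqrt n" using sigma by simp
    finally show ?thesis using sqn by (simp add: pos_le_divide_eq)
  qed
  have lam1: "lam \<le> 1"
  proof -
    have "lam \<le> \<epsilon> / (\<sigma> * sqrt n)" using lam unfolding n_def by simp
    also have "\<dots> \<le> \<epsilon> / 1"
    proof (rule frac_le)
      show "1 \<le> \<sigma> * sqrt n" using mult_mono[of 1 \<sigma> 1 "sqrt n"] sigma sqn by simp
    qed (use eps in auto)
    finally show ?thesis using eps by simp
  qed
  have A3j: "norm (gradf j xk - G j) \<le> lam * sqrt n * L j / 2 + sqrt n * M j / (\<beta> j + 1) * lam powr \<beta> j"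
    using A3[OF j lam(1) lam1, of xk] unfolding G_def n_def by simp
  have cs: "(gradf j xk - G j) \<bullet> s \<le> norm (gradf j xk - G j) * d"
    unfolding d_def by (rule norm_cauchy_schwarz[THEN order_trans]) simp
  have lampow: "lam powr \<beta> j \<le> (d / sqrt n) powr \<beta> j"
    using lamd sqn par lam by (intro powr_mono2) (auto simp: pos_le_divide_eq)
  have pw: "sqrt n * (d / sqrt n) powr \<beta> j * d = n powr ((1 - \<beta> j) / 2) * d powr (\<beta> j + 1)"
  proof -
    have "sqrt n = n powr (1/2)" using n1 by (simp add: powr_half_sqrt)
    have e1: "(d / sqrt n) powr \<beta> j = d powr \<beta> j / sqrt n powr \<beta> j"
      using dpos sqn by (simp add: powr_divide)
    have e2: "sqrt n / sqrt n powr \<beta> j = n powr ((1 - \<beta> j) / 2)"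
      using n1 by (simp add: powr_half_sqrt[symmetric] powr_powr powr_diff[symmetric] diff_divide_distrib)
    have e3: "d powr \<beta> j * d = d powr (\<beta> j + 1)" using dpos by (simp add: powr_add)
    have "sqrt n * (d / sqrt n) powr \<beta> j * d = (sqrt n / sqrt n powr \<beta> j) * (d powr \<beta> j * d)"
      unfolding e1 by simp
    then show ?thesis unfolding e2 e3 .
  qed
  define C where "C = n powr ((1 - \<beta> j) / 2)"
  have Cpos: "C \<ge> 0" unfolding C_def by simp
  have err: "(gradf j xk - G j) \<bullet> s \<le> L j / 2 * d\<^sup>2 + M j / (\<beta> j + 1) * C * d powr (\<beta> j + 1)"
  proof -
    have "(gradf j xk - G j) \<bullet> s \<le> (lam * sqrt n * L j / 2 + sqrt n * M j / (\<beta> j + 1) * lam powr \<beta> j) * d"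
      using cs A3j dpos by (meson mult_right_mono less_imp_le order_trans)
    also have "\<dots> = (lam * sqrt n) * d * (L j / 2) + (M j / (\<beta> j + 1)) * (sqrt n * lam powr \<beta> j * d)"
      by (simp add: algebra_simps)
    also have "\<dots> \<le> d * d * (L j / 2) + (M j / (\<beta> j + 1)) * (sqrt n * (d / sqrt n) powr \<beta> j * d)"
      using lamd lampow dpos par sqn
      by (intro add_mono mult_right_mono mult_left_mono) auto
    also have "\<dots> = L j / 2 * d\<^sup>2 + M j / (\<beta> j + 1) * C * d powr (\<beta> j + 1)"
      unfolding pw C_def by (simp add: power2_eq_square mult_ac)
    finally show ?thesis .
  qed
  have four: "4 powr \<beta> j \<ge> 1" using par by (simp add: ge_one_powr_ge_zero)
  have Cmono: "M j / (\<beta> j + 1) * C * d powr (\<beta> j + 1) \<le> (4 powr \<beta> j * C * M j) / (\<beta> j + 1) * d powr (\<beta> j + 1)"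
  proof -
    have "C * M j \<le> 4 powr \<beta> j * C * M j" using four Cpos par
      using mult_right_mono[OF four, of "C * M j"] by (simp add: mult.assoc)
    then have "C * M j / (\<beta> j + 1) \<le> 4 powr \<beta> j * C * M j / (\<beta> j + 1)" using par by (intro divide_right_mono) auto
    then have "C * M j / (\<beta> j + 1) * d powr (\<beta> j + 1) \<le> 4 powr \<beta> j * C * M j / (\<beta> j + 1) * d powr (\<beta> j + 1)"
      by (rule mult_right_mono) simp
    moreover have "M j / (\<beta> j + 1) * C = C * M j / (\<beta> j + 1)" by simp
    ultimately show ?thesis by (simp add: mult.commute)
  qed
  have gsplit: "gradf j xk \<bullet> s = G j \<bullet> s + (gradf j xk - G j) \<bullet> s" by (simp add: inner_diff_left)
  have real: "f j xbar + a \<le> f j xk + b - (\<sigma> - 5 * L j - Bbar) / 2 * d\<^sup>2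
      + (4 powr \<beta> j * n powr ((1 - \<beta> j) / 2) * M j + M j) / (\<beta> j + 1) * d powr (\<beta> j + 1)"
  proof -
    have d2: "d\<^sup>2 \<ge> 0" by simp
    have nn: "0 \<le> (3 * L j + Bbar) * d\<^sup>2" using par A1(1) by simp
    have e1: "(\<sigma> - 5 * L j - Bbar) / 2 * d\<^sup>2 = \<sigma> / 2 * d\<^sup>2 - L j / 2 * d\<^sup>2 - L j / 2 * d\<^sup>2 - (3 * L j + Bbar) * d\<^sup>2 / 2"
      by (simp add: field_simps)
    have e2: "(4 powr \<beta> j * n powr ((1 - \<beta> j) / 2) * M j + M j) / (\<beta> j + 1) * d powr (\<beta> j + 1)
       = (4 powr \<beta> j * C * M j) / (\<beta> j + 1) * d powr (\<beta> j + 1) + M j / (\<beta> j + 1) * d powr (\<beta> j + 1)"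
      unfolding C_def by (simp add: add_divide_distrib distrib_right)
    show ?thesis unfolding e1 e2 using fA2 gsplit err Cmono key qge nn by linarith
  qed
  show "ereal (f j xbar) + h j xbar
             \<le> ereal (f j xk) + h j xk
                - ereal ((\<sigma> - 5 * L j - Bbar) / 2 * (norm (xbar - xk))\<^sup>2)
                + ereal ((4 powr \<beta> j * real CARD('n) powr ((1 - \<beta> j) / 2) * M j + M j)
                          / (\<beta> j + 1) * norm (xbar - xk) powr (\<beta> j + 1))"
    using real a b unfolding d_def s_def n_def by simp
qed

end
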